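(* If $\mathbf{X} \in \mathbb{R}^{m \times n}$ admits a factorization of the form \begin{equation} \mathbf{X} = \begin{bmatrix} \mathbf{u} & 0 \\ 0 & -\mathbf{u} \end{bmatrix} \begin{bmatrix} 0 & \mathbf{v}^{T} \\ \mathbf{v}^{T} & 0 \end{bmatrix} \end{equation} for some $\mathbf{v} \in \mathbb{R}^{n-1}$ and $\mathbf{u} \in \mathbb{R}^{m-1}$, then $\mathbf{X} \in \mathcal{N}(\mathscr{S}, 2)$.
   Context: Let $\mathscr{S} \colon \mathbb{R}^{m \times n} \to \mathbb{R}^{m+n-1}$ be the lifted linear convolution map, i.e. the linear operator with $(\mathscr{S}(\mathbf{W}))_k = \langle \mathbf{W}, \mathbf{S}_k \rangle$ for $1 \le k \le m+n-1$, where $(\mathbf{S}_k)_{ij} = 1$ if $i + j = k+1$ and $0$ otherwise ($1 \le i \le m$, $1 \le j \le n$); thus $\mathscr{S}$ sums the entries of its argument along anti-diagonals and satisfies $\mathscr{S}(\mathbf{x}\mathbf{y}^{T}) = \mathbf{x} \star \mathbf{y}$ (linear convolution). For a linear operator $\mathscr{S}$, $\mathcal{N}(\mathscr{S}, k) = \{\mathbf{X} \in \mathbb{R}^{m \times n} : \mathrm{rank}(\mathbf{X}) \le k,\ \mathscr{S}(\mathbf{X}) = \mathbf{0}\}$ denotes the rank $k$ null space. In the factorization, the left factor is $m \times 2$ with columns $(\mathbf{u}; 0)$ and $(0; -\mathbf{u})$, and the right factor is $2 \times n$ with rows $(0, \mathbf{v}^{T})$ and $(\mathbf{v}^{T}, 0)$.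 *)

theory Defs
  imports "Jordan_Normal_Form.DL_Rank"
begin

(* All indices are 0-based (JNF convention). Paper's 1-based (i,j,k) with
   i + j = k + 1 becomes 0-based i + j = k. *)

definition frob_inner :: "real mat \<Rightarrow> real mat \<Rightarrow> real" where
  "frob_inner W V = (\<Sum>i<dim_row W. \<Sum>j<dim_col W. W $$ (i,j) * V $$ (i,j))"

definition S_mat :: "nat \<Rightarrow> nat \<Rightarrow> nat \<Rightarrow> real mat" where
  "S_mat m n k = mat m n (\<lambda>(i,j). if i + j = k then 1 else 0)"

definition lifted_conv :: "nat \<Rightarrow> nat \<Rightarrow> real mat \<Rightarrow> real vec" where
  "lifted_conv m n W = vec (m + n - 1) (\<lambda>k. frob_inner W (S_mat m n k))"

definition rank_null_space :: "nat \<Rightarrow> nat \<Rightarrow> nat \<Rightarrow> real mat set" where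
  "rank_null_space m n k =
     {X \<in> carrier_mat m n. vec_space.rank m X \<le> k \<and> lifted_conv m n X = 0\<^sub>v (m + n - 1)}"

(* left factor: m x 2 with columns (u;0) and (0;-u), u of length m-1 *)
definition left_factor :: "nat \<Rightarrow> real vec \<Rightarrow> real mat" where
  "left_factor m u = mat m 2 (\<lambda>(i,j).
      if j = 0 then (if i < m - 1 then u $ i else 0)
      else (if i = 0 then 0 else - (u $ (i - 1))))"

(* right factor: 2 x n with rows (0, v^T) and (v^T, 0), v of length n-1 *)
definition right_factor :: "nat \<Rightarrow> real vec \<Rightarrow> real mat" where
  "right_factor n v = mat 2 n (\<lambda>(i,j).
      if i = 0 then (if j = 0 then 0 else v $ (j - 1))
      else (if j < n - 1 then v $ j else 0))"

end

theory Submission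
  imports Defs
begin

definition gf :: "nat \<Rightarrow> nat \<Rightarrow> real vec \<Rightarrow> real vec \<Rightarrow> nat \<Rightarrow> nat \<Rightarrow> real" where
  "gf m n u v i j = (if i < m - 1 \<and> 1 \<le> j \<and> j < n then u $ i * v $ (j - 1) else 0)"

lemma X_entry:
  assumes "i < m" "j < n"
  shows "(left_factor m u * right_factor n v) $$ (i,j)
     = gf m n u v i j - (if i = 0 then 0 else gf m n u v (i - 1) (j + 1))"
  using assms
  by (auto simp: left_factor_def right_factor_def gf_def scalar_prod_def numeral_2_eq_2 lessThan_Suc)

lemma telescope:
  fixes h :: "nat \<Rightarrow> real"
  shows "(\<Sum>i<N. h i - (if i = 0 then 0 else h (i - 1))) = (if N = 0 then 0 else (h (N - 1) :: real))"
  by (induction N) auto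

theorem proposition2:
  fixes m n :: nat and X :: "real mat" and u v :: "real vec"
  assumes "m \<ge> 1" and "n \<ge> 1"
    and "u \<in> carrier_vec (m - 1)" and "v \<in> carrier_vec (n - 1)"
    and "X = left_factor m u * right_factor n v"
  shows "X \<in> rank_null_space m n 2"
proof -
  have Xc: "X \<in> carrier_mat m n"
    unfolding assms(5) by (rule mult_carrier_mat[of _ m 2]) (auto simp: left_factor_def right_factor_def)
  define A :: "real mat" where "A = mat m n (\<lambda>(i,j). gf m n u v i j)"
  define B :: "real mat" where "B = mat m n (\<lambda>(i,j). (if i = 0 then 0 else - 1) * gf m n u v (i - 1) (j + 1))"
  have XAB: "X = A + B"
    by (rule eq_matI) (use Xc in \<open>auto simp: A_def B_def assms(5) X_entry\<close>)
  have rA: "vec_space.rank m A \<le> 1"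
    by (rule vec_space.rank_le_1_product_entries[of A m n
        "\<lambda>i. if i < m - 1 then u $ i else 0" "\<lambda>j. if 1 \<le> j \<and> j < n then v $ (j - 1) else 0"])
       (auto simp: A_def gf_def)
  have rB: "vec_space.rank m B \<le> 1"
    by (rule vec_space.rank_le_1_product_entries[of B m n
        "\<lambda>i. if i = 0 then 0 else if i - 1 < m - 1 then - (u $ (i - 1)) else 0"
        "\<lambda>j. if j + 1 < n then v $ j else 0"])
       (auto simp: B_def gf_def)
  have "vec_space.rank m X \<le> 2"
    using vec_space.rank_subadditive[of A m n B] rA rB XAB
    by (auto simp: A_def B_def)
  moreover have "lifted_conv m n X = 0\<^sub>v (m + n - 1)"
  proof (rule eq_vecI)
    fix k assume "k < dim_vec (0\<^sub>v (m + n - 1) :: real vec)"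
    define h where "h i = (if i \<le> k then gf m n u v i (k - i) else 0)" for i
    have pt: "(\<Sum>j<n. X $$ (i, j) * (if i + j = k then 1 else 0))
              = h i - (if i = 0 then 0 else h (i - 1))" if "i < m" for i
    proof (cases "i \<le> k \<and> k - i < n")
      case True
      have "(\<Sum>j<n. X $$ (i, j) * (if i + j = k then 1 else 0))
          = (\<Sum>j<n. if j = k - i then X $$ (i, j) else 0)"
        by (rule sum.cong) (use True in auto)
      also have "\<dots> = X $$ (i, k - i)" using True by simp
      finally show ?thesis using True that
        by (auto simp: assms(5) X_entry h_def gf_def Suc_diff_le)
    next
      case False
      have "(\<Sum>j<n. X $$ (i, j) * (if i + j = k then 1 else 0)) = 0"
        by (rule sum.neutral) (use False in auto)
      then show ?thesis using False that
        by (auto simp: h_def gf_def)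
    qed
    have "frob_inner X (S_mat m n k) = (\<Sum>i<m. \<Sum>j<n. X $$ (i, j) * (if i + j = k then 1 else 0))"
      unfolding frob_inner_def S_mat_def using Xc by auto
    also have "\<dots> = (\<Sum>i<m. h i - (if i = 0 then 0 else h (i - 1)))"
      by (rule sum.cong) (auto simp: pt)
    also have "\<dots> = 0" unfolding telescope using assms(1) by (auto simp: h_def gf_def)
    finally show "lifted_conv m n X $ k = 0\<^sub>v (m + n - 1) $ k"
      using \<open>k < _\<close> by (simp add: lifted_conv_def)
  qed (simp add: lifted_conv_def)
  ultimately show ?thesis using Xc by (simp add: rank_null_space_def)
qed

end
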